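(* Let $q$ be a prime power, $m\ge 1$, and let $\mathcal{C}$ be an $[n,k]$ linear code over $\mathbb{F}_{q^m}$. The generalized subfield subcodes of $\mathcal{C}$ (over all choices of the basis $\mathcal{B}$, of $u\in\{1,\dots,m\}^n$, of $f\in GL_q(m)^n$ and of the block permutation $\pi$) are exactly the codes $\mathcal{C}P\cap\mathbb{F}_q^n$, where $P$ ranges over all $n\times n$ monomial matrices over $\mathbb{F}_{q^m}$ (i.e. exactly the subfield subcodes over $\mathbb{F}_q$ of the codes equivalent to $\mathcal{C}$ under $\mathbb{F}_{q^m}$-linear Hamming isometries).
   Context: A monomial matrix is a square matrix with exactly one nonzero entry in each row and each column; $\mathcal{C}P=\{cP: c\in\mathcal{C}\}$. For a basis $\mathcal{B}=(b_1,\dots,b_m)$ of $\mathbb{F}_{q^m}$ over $\mathbb{F}_q$, let $\phi_{\mathcal{B}}:\mathbb{F}_{q^m}\to\mathbb{F}_q^m$ send $\sum_i x_ib_i$ to $(x_1,\dots,x_m)$, and $\Phi_{\mathcal{B}}(c_1,\dots,c_n)=(\phi_{\mathcal{B}}(c_1)|\cdots|\phi_{\mathcal{B}}(c_n))\in(\mathbb{F}_q^m)^n=\mathbb{F}_q^{nm}$; the $q$-ary image is $Im_q(\mathcal{C})=\Phi_{\mathcal{B}}(\mathcal{C})$. $GL_q(m)$ is the group of $\mathbb{F}_q$-linear automorphisms of $\mathbb{F}_q^m$. For $f=(f_1,\dots,f_n)\in GL_q(m)^n$ and a permutation $\pi$ of $\{1,\dots,n\}$, $mon=\pi\circ f$ acts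 on $(x_1|\cdots|x_n)\in(\mathbb{F}_q^m)^n$ by replacing each block $x_i$ by $f_i(x_i)$ and then permuting the $n$ blocks according to $\pi$. For $u=(u_1,\dots,u_n)\in\{1,\dots,m\}^n$ and an $\mathbb{F}_q$-linear code $D\subseteq(\mathbb{F}_q^m)^n$, writing $x_{j,l}$ for the $l$-th coordinate of the $j$-th block of $x$, let $S_u(D)=\{(x_{1,u_1},\dots,x_{n,u_n}) : x\in D,\ x_{j,l}=0 \text{ for all } j \text{ and all } l\neq u_j\}\subseteq\mathbb{F}_q^n$ (shortening on all positions other than the $u_j$-th of each block). The generalized subfield subcode of $\mathcal{C}$ relative to $\mathcal{B},u,mon$ is $GSS(\mathcal{C})=S_u(mon(Im_q(\mathcal{C})))$. *)

theory Defs
  imports "HOL-Combinatorics.Permutations"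
begin

text \<open>Ambient field K = F_{q^m} is a finite field type 'a; F_q is a subfield F of it.
Vectors of length n are functions nat => 'a vanishing outside {0..<n}.
Coordinates/blocks are 0-based.\<close>

definition subfield :: "'a::field set \<Rightarrow> bool" where
  "subfield F \<longleftrightarrow> 0 \<in> F \<and> 1 \<in> F \<and> (\<forall>x\<in>F. \<forall>y\<in>F. x + y \<in> F \<and> x * y \<in> F)
     \<and> (\<forall>x\<in>F. - x \<in> F) \<and> (\<forall>x\<in>F. x \<noteq> 0 \<longrightarrow> inverse x \<in> F)"

definition vecs :: "nat \<Rightarrow> (nat \<Rightarrow> 'a::zero) set" where
  "vecs n = {x. \<forall>i\<ge>n. x i = 0}"

definition subvecs :: "'a::zero set \<Rightarrow> nat \<Rightarrow> (nat \<Rightarrow> 'a) set" where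
  "subvecs F n = {x \<in> vecs n. \<forall>i<n. x i \<in> F}"

definition linear_code :: "nat \<Rightarrow> (nat \<Rightarrow> 'a::field) set \<Rightarrow> bool" where
  "linear_code n C \<longleftrightarrow> C \<subseteq> vecs n \<and> (\<lambda>_. 0) \<in> C
     \<and> (\<forall>x\<in>C. \<forall>y\<in>C. (\<lambda>i. x i + y i) \<in> C) \<and> (\<forall>a. \<forall>x\<in>C. (\<lambda>i. a * x i) \<in> C)"

definition monomial_matrix :: "nat \<Rightarrow> (nat \<Rightarrow> nat \<Rightarrow> 'a::field) \<Rightarrow> bool" where
  "monomial_matrix n P \<longleftrightarrow> (\<forall>i j. (i \<ge> n \<or> j \<ge> n) \<longrightarrow> P i j = 0)
     \<and> (\<forall>i<n. \<exists>!j. j < n \<and> P i j \<noteq> 0) \<and> (\<forall>j<n. \<exists>!i. i < n \<and> P i j \<noteq> 0)"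

definition vec_mat :: "nat \<Rightarrow> (nat \<Rightarrow> 'a::field) \<Rightarrow> (nat \<Rightarrow> nat \<Rightarrow> 'a) \<Rightarrow> nat \<Rightarrow> 'a" where
  "vec_mat n c P = (\<lambda>j. \<Sum>i<n. c i * P i j)"

definition is_basis :: "'a::field set \<Rightarrow> nat \<Rightarrow> 'a list \<Rightarrow> bool" where
  "is_basis F m B \<longleftrightarrow> length B = m \<and>
     (\<forall>x. \<exists>!v. v \<in> subvecs F m \<and> x = (\<Sum>i<m. v i * B ! i))"

definition coords :: "'a::field set \<Rightarrow> nat \<Rightarrow> 'a list \<Rightarrow> 'a \<Rightarrow> nat \<Rightarrow> 'a" where
  "coords F m B x = (THE v. v \<in> subvecs F m \<and> x = (\<Sum>i<m. v i * B ! i))"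

text \<open>Phi_B: block j of the image is phi_B(c_j); elements of (F^m)^n are
  represented as functions nat => nat => 'a (block index, coordinate in block).\<close>
definition Phi :: "'a::field set \<Rightarrow> nat \<Rightarrow> nat \<Rightarrow> 'a list \<Rightarrow> (nat \<Rightarrow> 'a) \<Rightarrow> nat \<Rightarrow> nat \<Rightarrow> 'a" where
  "Phi F n m B c = (\<lambda>j. if j < n then coords F m B (c j) else (\<lambda>_. 0))"

definition q_image :: "'a::field set \<Rightarrow> nat \<Rightarrow> nat \<Rightarrow> 'a list \<Rightarrow> (nat \<Rightarrow> 'a) set \<Rightarrow> (nat \<Rightarrow> nat \<Rightarrow> 'a) set" where
  "q_image F n m B C = Phi F n m B ` C"

definition GLq :: "'a::field set \<Rightarrow> nat \<Rightarrow> ((nat \<Rightarrow> 'a) \<Rightarrow> (nat \<Rightarrow> 'a)) set" where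
  "GLq F m = {f. bij_betw f (subvecs F m) (subvecs F m)
     \<and> (\<forall>x\<in>subvecs F m. \<forall>y\<in>subvecs F m. f (\<lambda>i. x i + y i) = (\<lambda>i. f x i + f y i))
     \<and> (\<forall>a\<in>F. \<forall>x\<in>subvecs F m. f (\<lambda>i. a * x i) = (\<lambda>i. a * f x i))}"

text \<open>mon = pi o f: apply f_i to block i, then move block i to position pi i.\<close>
definition mon_map :: "nat \<Rightarrow> (nat \<Rightarrow> nat) \<Rightarrow> (nat \<Rightarrow> (nat \<Rightarrow> 'a) \<Rightarrow> (nat \<Rightarrow> 'a))
    \<Rightarrow> (nat \<Rightarrow> nat \<Rightarrow> 'a::zero) \<Rightarrow> nat \<Rightarrow> nat \<Rightarrow> 'a" where
  "mon_map n \<pi> f x = (\<lambda>j. if j < n then f (inv \<pi> j) (x (inv \<pi> j)) else (\<lambda>_. 0))"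

definition shorten :: "nat \<Rightarrow> nat \<Rightarrow> (nat \<Rightarrow> nat) \<Rightarrow> (nat \<Rightarrow> nat \<Rightarrow> 'a::zero) set \<Rightarrow> (nat \<Rightarrow> 'a) set" where
  "shorten n m u D = (\<lambda>x. \<lambda>j. if j < n then x j (u j) else 0) `
     {x \<in> D. \<forall>j<n. \<forall>l<m. l \<noteq> u j \<longrightarrow> x j l = 0}"

definition GSS :: "'a::field set \<Rightarrow> nat \<Rightarrow> nat \<Rightarrow> 'a list \<Rightarrow> (nat \<Rightarrow> nat)
    \<Rightarrow> (nat \<Rightarrow> (nat \<Rightarrow> 'a) \<Rightarrow> (nat \<Rightarrow> 'a)) \<Rightarrow> (nat \<Rightarrow> nat) \<Rightarrow> (nat \<Rightarrow> 'a) set \<Rightarrow> (nat \<Rightarrow> 'a) set" where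
  "GSS F n m B u f \<pi> C = shorten n m u (mon_map n \<pi> f ` q_image F n m B C)"

end

theory Submission
  imports Defs
begin

definition uvec :: "nat \<Rightarrow> nat \<Rightarrow> 'a::{zero,one}" where
  "uvec u = (\<lambda>l. if l = u then 1 else 0)"

definition dec :: "nat \<Rightarrow> 'a list \<Rightarrow> (nat \<Rightarrow> 'a) \<Rightarrow> 'a::field" where
  "dec m B v = (\<Sum>i<m. v i * B ! i)"

lemma sf_facts:
  assumes "subfield F"
  shows "0 \<in> F" "1 \<in> F" "x \<in> F \<Longrightarrow> y \<in> F \<Longrightarrow> x + y \<in> F"
    "x \<in> F \<Longrightarrow> y \<in> F \<Longrightarrow> x * y \<in> F"
  using assms unfolding subfield_def by auto

lemma subvecs_add: "subfield F \<Longrightarrow> v \<in> subvecs F m \<Longrightarrow> w \<in> subvecs F m \<Longrightarrow> (\<lambda>i. v i + w i) \<in> subvecs F m"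
  unfolding subvecs_def vecs_def subfield_def by auto

lemma subvecs_smult: "subfield F \<Longrightarrow> a \<in> F \<Longrightarrow> v \<in> subvecs F m \<Longrightarrow> (\<lambda>i. a * v i) \<in> subvecs F m"
  unfolding subvecs_def vecs_def using sf_facts(4)[of F a] by auto

lemma subvecs_zero: "subfield F \<Longrightarrow> (\<lambda>_. 0) \<in> subvecs F m"
  unfolding subvecs_def vecs_def using sf_facts by auto

lemma uvec_subvecs: "subfield F \<Longrightarrow> u < m \<Longrightarrow> uvec u \<in> subvecs F m"
  unfolding subvecs_def vecs_def uvec_def using sf_facts by auto

lemma dec_add: "dec m B (\<lambda>i. v i + w i) = dec m B v + dec m B w"
  unfolding dec_def by (simp add: distrib_right sum.distrib)

lemma dec_smult: "dec m B (\<lambda>i. a * v i) = a * dec m B v"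
  unfolding dec_def by (simp add: sum_distrib_left mult.assoc)

lemma GLq_zero:
  assumes "f \<in> GLq F m" "subfield F"
  shows "f (\<lambda>_. 0) = (\<lambda>_. 0)"
proof -
  have z: "(\<lambda>_. 0) \<in> subvecs F m" using subvecs_zero[OF assms(2)] .
  have h: "f (\<lambda>i. x i + y i) = (\<lambda>i. f x i + f y i)" if "x \<in> subvecs F m" "y \<in> subvecs F m" for x y
    using assms(1) that unfolding GLq_def by blast
  have "f (\<lambda>_. 0::'a) = (\<lambda>i. f (\<lambda>_.0) i + f (\<lambda>_.0) i)"
    using h[OF z z] by simp
  then have "\<forall>i. f (\<lambda>_.0) i = f (\<lambda>_.0) i + f (\<lambda>_.0) i" by metis
  then show ?thesis by (metis add_cancel_right_right)
qed

locale bctx =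
  fixes F :: "'a::field set" and m :: nat and B :: "'a list"
  assumes sf: "subfield F" and bas: "is_basis F m B" and m1: "m \<ge> 1"
begin

lemma ex1: "\<exists>!v. v \<in> subvecs F m \<and> x = dec m B v"
  using bas unfolding is_basis_def dec_def by auto

lemma coords_prop: "coords F m B x \<in> subvecs F m \<and> x = dec m B (coords F m B x)"
proof -
  from theI'[OF ex1[of x]] show ?thesis unfolding coords_def dec_def by simp
qed

lemma coords_mem: "coords F m B x \<in> subvecs F m" using coords_prop by blast
lemma dec_coords: "dec m B (coords F m B x) = x" using coords_prop by metis

lemma coords_dec: "v \<in> subvecs F m \<Longrightarrow> coords F m B (dec m B v) = v"
  unfolding coords_def dec_def
  using the1_equality[OF ex1[of "dec m B v"]] unfolding dec_def by blast

lemma coords_inj: "coords F m B x = coords F m B y \<Longrightarrow> x = y"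
  by (metis dec_coords)

lemma coords_add: "coords F m B (x + y) = (\<lambda>i. coords F m B x i + coords F m B y i)"
proof -
  have "x + y = dec m B (\<lambda>i. coords F m B x i + coords F m B y i)"
    by (simp add: dec_add dec_coords)
  then show ?thesis using coords_dec subvecs_add[OF sf coords_mem coords_mem] by metis
qed

lemma coords_smult: "a \<in> F \<Longrightarrow> coords F m B (a * x) = (\<lambda>i. a * coords F m B x i)"
proof -
  assume a: "a \<in> F"
  have "a * x = dec m B (\<lambda>i. a * coords F m B x i)"
    by (simp add: dec_smult dec_coords)
  then show ?thesis using coords_dec subvecs_smult[OF sf a coords_mem] by metis
qed

lemma coords_zero: "coords F m B 0 = (\<lambda>_. 0)"
proof -
  have "dec m B (\<lambda>_. 0) = 0" unfolding dec_def by simp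
  then show ?thesis using coords_dec[OF subvecs_zero[OF sf]] by metis
qed

lemma coords_B: "u < m \<Longrightarrow> coords F m B (B ! u) = uvec u"
proof -
  assume u: "u < m"
  have "dec m B (uvec u) = B ! u" unfolding dec_def uvec_def using u
    by (subst sum.cong[OF refl, of _ _ "\<lambda>i. if i = u then B!i else 0"]) auto
  then show ?thesis using coords_dec[OF uvec_subvecs[OF sf u]] by metis
qed

lemma B0_nz: "B ! 0 \<noteq> 0"
proof
  assume "B ! 0 = 0"
  then have "uvec 0 = (\<lambda>_. 0::'a)" using coords_B[of 0] m1 coords_zero by simp
  then show False unfolding uvec_def by (metis one_neq_zero)
qed

end

lemma GLq_bij: "f \<in> GLq F m \<Longrightarrow> bij_betw f (subvecs F m) (subvecs F m)"
  unfolding GLq_def mem_Collect_eq by (rule conjunct1)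

lemma GLq_into: "f \<in> GLq F m \<Longrightarrow> v \<in> subvecs F m \<Longrightarrow> f v \<in> subvecs F m"
  by (rule bij_betw_apply[OF GLq_bij])

lemma GLq_inj: "f \<in> GLq F m \<Longrightarrow> v \<in> subvecs F m \<Longrightarrow> w \<in> subvecs F m \<Longrightarrow> f v = f w \<Longrightarrow> v = w"
  by (rule inj_onD[OF bij_betw_imp_inj_on[OF GLq_bij]])

lemma GLq_surj: "f \<in> GLq F m \<Longrightarrow> w \<in> subvecs F m \<Longrightarrow> \<exists>v\<in>subvecs F m. f v = w"
proof -
  assume f: "f \<in> GLq F m" and w: "w \<in> subvecs F m"
  have "f ` subvecs F m = subvecs F m" by (rule bij_betw_imp_surj_on[OF GLq_bij[OF f]])
  with w have "w \<in> f ` subvecs F m" by simp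
  then show ?thesis by (rule imageE) (rule bexI, rule sym)
qed

lemma GLq_smult: "f \<in> GLq F m \<Longrightarrow> a \<in> F \<Longrightarrow> v \<in> subvecs F m \<Longrightarrow> f (\<lambda>i. a * v i) = (\<lambda>i. a * f v i)"
  unfolding GLq_def mem_Collect_eq by (elim conjE) (drule bspec, assumption, drule bspec, assumption+)

context bctx
begin

lemma block1:
  assumes g: "g \<in> GLq F m" and gb: "g (coords F m B b) = uvec v" and a: "a \<in> F"
  shows "g (coords F m B (a * b)) = (\<lambda>l. a * uvec v l)"
  using GLq_smult[OF g a coords_mem] gb coords_smult[OF a] by simp

lemma block2:
  assumes g: "g \<in> GLq F m" and gb: "g (coords F m B b) = uvec v" and v: "v < m"
    and z: "\<forall>l<m. l \<noteq> v \<longrightarrow> g (coords F m B x) l = 0"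
  shows "x = g (coords F m B x) v * b" "g (coords F m B x) v \<in> F"
proof -
  let ?w = "g (coords F m B x)"
  have w: "?w \<in> subvecs F m" by (rule GLq_into[OF g coords_mem])
  show aF: "?w v \<in> F" using w v unfolding subvecs_def by auto
  have "?w = (\<lambda>l. ?w v * uvec v l)"
  proof
    fix l
    show "?w l = ?w v * uvec v l"
    proof (cases "l < m")
      case True then show ?thesis using z unfolding uvec_def by auto
    next
      case False
      then have "?w l = 0" using w unfolding subvecs_def vecs_def by auto
      then show ?thesis using False v unfolding uvec_def by auto
    qed
  qed
  also have "\<dots> = g (coords F m B (?w v * b))" using block1[OF g gb aF] by simp
  finally have eq: "?w = g (coords F m B (?w v * b))" .
  have "coords F m B x = coords F m B (?w v * b)"
    by (rule GLq_inj[OF g coords_mem coords_mem eq])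
  then show "x = ?w v * b" by (rule coords_inj)
qed

lemma mul_GLq:
  assumes g: "\<gamma> \<noteq> 0"
  shows "(\<lambda>v. coords F m B (\<gamma> * dec m B v)) \<in> GLq F m"
  unfolding GLq_def
proof (intro CollectI conjI ballI)
  let ?f = "\<lambda>v. coords F m B (\<gamma> * dec m B v)"
  have inj: "inj_on ?f (subvecs F m)"
  proof (rule inj_onI)
    fix v w assume v: "v \<in> subvecs F m" and w: "w \<in> subvecs F m" and e: "?f v = ?f w"
    from coords_inj[OF e] g have "dec m B v = dec m B w" by simp
    then show "v = w" using coords_dec[OF v] coords_dec[OF w] by metis
  qed
  have "?f ` subvecs F m = subvecs F m"
  proof
    show "?f ` subvecs F m \<subseteq> subvecs F m" using coords_mem by blast
  next
    show "subvecs F m \<subseteq> ?f ` subvecs F m"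
    proof
      fix w assume w: "w \<in> subvecs F m"
      have e1: "?f (coords F m B (inverse \<gamma> * dec m B w)) = coords F m B (\<gamma> * (inverse \<gamma> * dec m B w))"
        by (simp only: dec_coords)
      have e2: "\<gamma> * (inverse \<gamma> * dec m B w) = dec m B w" using g by (simp add: field_simps)
      have "?f (coords F m B (inverse \<gamma> * dec m B w)) = w" using e1 e2 coords_dec[OF w] by simp
      then show "w \<in> ?f ` subvecs F m" using coords_mem by (metis imageI)
    qed
  qed
  then show "bij_betw ?f (subvecs F m) (subvecs F m)" using inj unfolding bij_betw_def by simp
next
  fix x y assume "x \<in> subvecs F m" "y \<in> subvecs F m"
  show "coords F m B (\<gamma> * dec m B (\<lambda>i. x i + y i))
     = (\<lambda>i. coords F m B (\<gamma> * dec m B x) i + coords F m B (\<gamma> * dec m B y) i)"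
    by (simp add: dec_add distrib_left coords_add)
next
  fix a x assume a: "a \<in> F" and "x \<in> subvecs F m"
  have e: "\<gamma> * dec m B (\<lambda>i. a * x i) = a * (\<gamma> * dec m B x)"
    unfolding dec_smult by (rule mult.left_commute)
  show "coords F m B (\<gamma> * dec m B (\<lambda>i. a * x i)) = (\<lambda>i. a * coords F m B (\<gamma> * dec m B x) i)"
    by (simp only: e coords_smult[OF a])
qed

lemma GSS_char:
  assumes pi: "\<pi> permutes {..<n}" and u: "\<forall>j<n. u j < m" and f: "\<forall>i<n. f i \<in> GLq F m"
    and beta: "\<forall>i<n. f i (coords F m B (\<beta> i)) = uvec (u (\<pi> i))"
  shows "GSS F n m B u f \<pi> C = {a \<in> subvecs F n. \<exists>c\<in>C. \<forall>i<n. c i = a (\<pi> i) * \<beta> i}"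
proof -
  have invlt: "inv \<pi> j < n" if "j < n" for j
    using permutes_in_image[OF permutes_inv[OF pi], of j] that by auto
  have invge: "inv \<pi> j = j" if "\<not> j < n" for j
    using permutes_not_in[OF permutes_inv[OF pi], of j] that by auto
  have pilt: "\<pi> i < n" if "i < n" for i
    using permutes_in_image[OF pi, of i] that by auto
  have mm: "mon_map n \<pi> f (Phi F n m B c) j = f (inv \<pi> j) (coords F m B (c (inv \<pi> j)))"
    if "j < n" for c j
    unfolding mon_map_def Phi_def using that invlt by auto
  have mmi: "mon_map n \<pi> f (Phi F n m B c) (\<pi> i) = f i (coords F m B (c i))"
    if "i < n" for c i
    using mm[OF pilt[OF that]] permutes_inverses(2)[OF pi] by simp
  show ?thesis
  proof
    show "GSS F n m B u f \<pi> C \<subseteq> {a \<in> subvecs F n. \<exists>c\<in>C. \<forall>i<n. c i = a (\<pi> i) * \<beta> i}"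
    proof
      fix y assume yin: "y \<in> GSS F n m B u f \<pi> C"
      have "y \<in> (\<lambda>x. \<lambda>j. if j < n then x j (u j) else 0) `
          {x \<in> mon_map n \<pi> f ` q_image F n m B C. \<forall>j<n. \<forall>l<m. l \<noteq> u j \<longrightarrow> x j l = 0}"
        using yin unfolding GSS_def shorten_def .
      then obtain x where yx: "y = (\<lambda>j. if j < n then x j (u j) else 0)"
        and xin: "x \<in> {x \<in> mon_map n \<pi> f ` q_image F n m B C. \<forall>j<n. \<forall>l<m. l \<noteq> u j \<longrightarrow> x j l = 0}"
        by (rule imageE)
      from xin have xim: "x \<in> mon_map n \<pi> f ` Phi F n m B ` C" and
        cond0: "\<forall>j<n. \<forall>l<m. l \<noteq> u j \<longrightarrow> x j l = 0"
        unfolding q_image_def mem_Collect_eq by (rule conjunct1, rule conjunct2)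
      obtain z where xz: "x = mon_map n \<pi> f z" and z: "z \<in> Phi F n m B ` C" using xim by (rule imageE)
      obtain c where zc: "z = Phi F n m B c" and c: "c \<in> C" using z by (rule imageE)
      have xc: "x = mon_map n \<pi> f (Phi F n m B c)" using xz zc by simp
      have cond: "\<forall>j<n. \<forall>l<m. l \<noteq> u j \<longrightarrow> mon_map n \<pi> f (Phi F n m B c) j l = 0"
        using cond0 unfolding xc .
      have y: "y = (\<lambda>j. if j < n then mon_map n \<pi> f (Phi F n m B c) j (u j) else 0)"
        using yx unfolding xc .
      have yi: "y (\<pi> i) = f i (coords F m B (c i)) (u (\<pi> i))" if "i < n" for i
        using y mmi[OF that] pilt[OF that] by simp
      have condi: "\<forall>l<m. l \<noteq> u (\<pi> i) \<longrightarrow> f i (coords F m B (c i)) l = 0" if i: "i < n" for i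
      proof (intro allI impI)
        fix l assume "l < m" "l \<noteq> u (\<pi> i)"
        then show "f i (coords F m B (c i)) l = 0"
          using cond[rule_format, OF pilt[OF i]] mmi[OF i] by simp
      qed
      have "y \<in> subvecs F n"
        unfolding subvecs_def vecs_def
      proof (intro CollectI conjI allI impI)
        fix j assume "n \<le> j" then show "y j = 0" using y by simp
      next
        fix j assume j: "j < n"
        have "f (inv \<pi> j) (coords F m B (c (inv \<pi> j))) \<in> subvecs F m"
          using GLq_into[OF f[rule_format, OF invlt[OF j]] coords_mem] .
        then show "y j \<in> F" using y j mm[OF j] u j unfolding subvecs_def by auto
      qed
      moreover have "\<forall>i<n. c i = y (\<pi> i) * \<beta> i"
      proof (intro allI impI)
        fix i assume i: "i < n"
        have g: "f i \<in> GLq F m" using f i by blast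
        have "c i = f i (coords F m B (c i)) (u (\<pi> i)) * \<beta> i"
          by (rule block2(1)[OF g beta[rule_format, OF i] u[rule_format, OF pilt[OF i]] condi[OF i]])
        then show "c i = y (\<pi> i) * \<beta> i" using yi[OF i] by simp
      qed
      ultimately show "y \<in> {a \<in> subvecs F n. \<exists>c\<in>C. \<forall>i<n. c i = a (\<pi> i) * \<beta> i}"
        using c by blast
    qed
  next
    show "{a \<in> subvecs F n. \<exists>c\<in>C. \<forall>i<n. c i = a (\<pi> i) * \<beta> i} \<subseteq> GSS F n m B u f \<pi> C"
    proof
      fix a assume "a \<in> {a \<in> subvecs F n. \<exists>c\<in>C. \<forall>i<n. c i = a (\<pi> i) * \<beta> i}"
      then obtain c where a: "a \<in> subvecs F n" and c: "c \<in> C"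
        and ca: "\<forall>i<n. c i = a (\<pi> i) * \<beta> i" by blast
      let ?x = "mon_map n \<pi> f (Phi F n m B c)"
      have xj: "?x j = (\<lambda>l. a j * uvec (u j) l)" if j: "j < n" for j
      proof -
        let ?i = "inv \<pi> j"
        have i: "?i < n" using invlt[OF j] .
        have pii: "\<pi> ?i = j" using permutes_inverses(1)[OF pi] by simp
        have aj: "a j \<in> F" using a j unfolding subvecs_def by auto
        have "c ?i = a j * \<beta> ?i" using ca[rule_format, OF i] pii by simp
        then have "?x j = f ?i (coords F m B (a j * \<beta> ?i))" using mm[OF j] by simp
        also have "\<dots> = (\<lambda>l. a j * uvec (u j) l)"
          using block1[OF f[rule_format, OF i] beta[rule_format, OF i] aj] pii by simp
        finally show ?thesis .
      qed
      have "a = (\<lambda>j. if j < n then ?x j (u j) else 0)"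
      proof
        fix j show "a j = (if j < n then ?x j (u j) else 0)"
        proof (cases "j < n")
          case True
          then have "?x j (u j) = a j" using xj[OF True] by (simp add: uvec_def)
          then show ?thesis using True by simp
        next
          case False then show ?thesis using a unfolding subvecs_def vecs_def by simp
        qed
      qed
      moreover have "?x \<in> {x \<in> mon_map n \<pi> f ` q_image F n m B C. \<forall>j<n. \<forall>l<m. l \<noteq> u j \<longrightarrow> x j l = 0}"
      proof (intro CollectI conjI allI impI)
        show "?x \<in> mon_map n \<pi> f ` q_image F n m B C" unfolding q_image_def using c by (intro imageI)
      next
        fix j l assume j: "j < n" and "l < m" "l \<noteq> u j"
        then show "?x j l = 0" using xj[OF j] by (simp add: uvec_def)
      qed
      ultimately show "a \<in> GSS F n m B u f \<pi> C"
        unfolding GSS_def shorten_def by (rule image_eqI)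
    qed
  qed
qed

end

definition Pm :: "nat \<Rightarrow> (nat \<Rightarrow> nat) \<Rightarrow> (nat \<Rightarrow> 'a) \<Rightarrow> nat \<Rightarrow> nat \<Rightarrow> 'a::field" where
  "Pm n \<sigma> p = (\<lambda>i j. if i < n \<and> j = \<sigma> i then p i else 0)"

lemma Pm_monomial:
  assumes s: "\<sigma> permutes {..<n}" and p: "\<forall>i<n. p i \<noteq> 0"
  shows "monomial_matrix n (Pm n \<sigma> p)"
proof -
  have slt: "\<sigma> i < n" if "i < n" for i using permutes_in_image[OF s, of i] that by auto
  have invlt: "inv \<sigma> j < n" if "j < n" for j
    using permutes_in_image[OF permutes_inv[OF s], of j] that by auto
  show ?thesis unfolding monomial_matrix_def Pm_def
  proof (intro conjI allI impI)
    fix i j :: nat assume "n \<le> i \<or> n \<le> j"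
    then show "(if i < n \<and> j = \<sigma> i then p i else 0) = 0" by (cases "i < n") (auto dest: slt)
  next
    fix i assume i: "i < n"
    show "\<exists>!j. j < n \<and> (if i < n \<and> j = \<sigma> i then p i else 0) \<noteq> 0"
      using i p slt by (intro ex1I[of _ "\<sigma> i"]) (auto split: if_splits)
  next
    fix j assume j: "j < n"
    show "\<exists>!i. i < n \<and> (if i < n \<and> j = \<sigma> i then p i else 0) \<noteq> 0"
    proof (intro ex1I[of _ "inv \<sigma> j"])
      show "inv \<sigma> j < n \<and> (if inv \<sigma> j < n \<and> j = \<sigma> (inv \<sigma> j) then p (inv \<sigma> j) else 0) \<noteq> 0"
        using invlt[OF j] p permutes_inverses(1)[OF s] by simp
    next
      fix i assume "i < n \<and> (if i < n \<and> j = \<sigma> i then p i else 0) \<noteq> 0"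
      then have "j = \<sigma> i" by (auto split: if_splits)
      then show "i = inv \<sigma> j" using permutes_inverses(2)[OF s] by simp
    qed
  qed
qed

lemma monomial_Pm:
  assumes P: "monomial_matrix n P"
  shows "\<exists>\<sigma> p. \<sigma> permutes {..<n} \<and> (\<forall>i<n. p i \<noteq> 0) \<and> P = Pm n \<sigma> p"
proof -
  define \<sigma> where "\<sigma> i = (if i < n then THE j. j < n \<and> P i j \<noteq> 0 else i)" for i
  have P3: "(\<forall>i j. (i \<ge> n \<or> j \<ge> n) \<longrightarrow> P i j = 0)
     \<and> (\<forall>i<n. \<exists>!j. j < n \<and> P i j \<noteq> 0) \<and> (\<forall>j<n. \<exists>!i. i < n \<and> P i j \<noteq> 0)"
    using P unfolding monomial_matrix_def .
  have z: "P i j = 0" if "n \<le> i \<or> n \<le> j" for i j using conjunct1[OF P3] that by blast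
  have row: "\<exists>!j. j < n \<and> P i j \<noteq> 0" if "i < n" for i using conjunct1[OF conjunct2[OF P3]] that by blast
  have col: "\<exists>!i. i < n \<and> P i j \<noteq> 0" if "j < n" for j using conjunct2[OF conjunct2[OF P3]] that by blast
  have sp: "\<sigma> i < n \<and> P i (\<sigma> i) \<noteq> 0" if "i < n" for i
  proof -
    have "(THE j. j < n \<and> P i j \<noteq> 0) < n \<and> P i (THE j. j < n \<and> P i j \<noteq> 0) \<noteq> 0"
      by (rule theI'[OF row[OF that]])
    then show ?thesis unfolding \<sigma>_def using that by simp
  qed
  have ex1u: "a = b" if "\<exists>!x. Q x" "Q a" "Q b" for Q :: "nat \<Rightarrow> bool" and a b
    using that by (elim ex1E) blast
  have rowu: "j = \<sigma> i" if "i < n" "j < n" "P i j \<noteq> 0" for i j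
    by (rule ex1u[OF row[OF that(1)]]) (use that sp[OF that(1)] in simp_all)
  have colu: "i = i'" if "i < n" "i' < n" "j < n" "P i j \<noteq> 0" "P i' j \<noteq> 0" for i i' j
    by (rule ex1u[OF col[OF that(3)]]) (use that in simp_all)
  have inj: "inj_on \<sigma> {..<n}"
  proof (rule inj_onI)
    fix x y assume x: "x \<in> {..<n}" and y: "y \<in> {..<n}" and e: "\<sigma> x = \<sigma> y"
    have x': "x < n" and y': "y < n" using x y by simp_all
    show "x = y"
      by (rule colu[OF x' y' conjunct1[OF sp[OF x']] conjunct2[OF sp[OF x']]]) (simp add: e sp[OF y'])
  qed
  have img: "\<sigma> ` {..<n} \<subseteq> {..<n}" using sp by auto
  have "\<sigma> ` {..<n} = {..<n}" by (rule endo_inj_surj[OF _ img inj]) simp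
  then have "bij_betw \<sigma> {..<n} {..<n}" using inj unfolding bij_betw_def by simp
  then have perm: "\<sigma> permutes {..<n}"
    by (rule bij_imp_permutes) (simp add: \<sigma>_def)
  have "P = Pm n \<sigma> (\<lambda>i. P i (\<sigma> i))"
  proof (intro ext)
    fix i j
    show "P i j = Pm n \<sigma> (\<lambda>i. P i (\<sigma> i)) i j"
    proof (cases "i < n \<and> j < n")
      case True
      show ?thesis
      proof (cases "j = \<sigma> i")
        case True
        then show ?thesis unfolding Pm_def using \<open>i < n \<and> j < n\<close> by simp
      next
        case False
        then have "P i j = 0" using rowu \<open>i < n \<and> j < n\<close> by blast
        then show ?thesis unfolding Pm_def using False by simp
      qed
    next
      case False then show ?thesis unfolding Pm_def using z by auto
    qed
  qed
  moreover have "\<forall>i<n. P i (\<sigma> i) \<noteq> 0" using sp by simp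
  ultimately show ?thesis using perm by (intro exI[of _ \<sigma>] exI[of _ "\<lambda>i. P i (\<sigma> i)"]) simp
qed

lemma vec_mat_Pm:
  assumes s: "\<sigma> permutes {..<n}"
  shows "vec_mat n c (Pm n \<sigma> p) = (\<lambda>j. if inv \<sigma> j < n then c (inv \<sigma> j) * p (inv \<sigma> j) else 0)"
proof
  fix j
  have "vec_mat n c (Pm n \<sigma> p) j = (\<Sum>i<n. if inv \<sigma> j = i then c i * p i else 0)"
    unfolding vec_mat_def Pm_def
    by (rule sum.cong) (auto simp: permutes_inv_eq[OF s])
  also have "\<dots> = (if inv \<sigma> j < n then c (inv \<sigma> j) * p (inv \<sigma> j) else 0)"
    by (simp add: sum.delta)
  finally show "vec_mat n c (Pm n \<sigma> p) j = (if inv \<sigma> j < n then c (inv \<sigma> j) * p (inv \<sigma> j) else 0)" .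
qed

lemma image_Pm:
  assumes s: "\<sigma> permutes {..<n}"
  shows "(\<lambda>c. vec_mat n c (Pm n \<sigma> p)) ` C \<inter> subvecs F n
     = {a \<in> subvecs F n. \<exists>c\<in>C. \<forall>i<n. c i * p i = a (\<sigma> i)}"
proof -
  have invlt: "inv \<sigma> j < n \<longleftrightarrow> j < n" for j
    using permutes_in_image[OF permutes_inv[OF s], of j] by auto
  have sinv: "inv \<sigma> (\<sigma> i) = i" for i using permutes_inverses(2)[OF s] .
  have sinv2: "\<sigma> (inv \<sigma> j) = j" for j using permutes_inverses(1)[OF s] .
  have slt: "\<sigma> i < n \<longleftrightarrow> i < n" for i using permutes_in_image[OF s, of i] by auto
  show ?thesis
  proof
    show "(\<lambda>c. vec_mat n c (Pm n \<sigma> p)) ` C \<inter> subvecs F n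
        \<subseteq> {a \<in> subvecs F n. \<exists>c\<in>C. \<forall>i<n. c i * p i = a (\<sigma> i)}"
    proof
      fix a assume aa: "a \<in> (\<lambda>c. vec_mat n c (Pm n \<sigma> p)) ` C \<inter> subvecs F n"
      then have a: "a \<in> subvecs F n" by (rule IntD2)
      from aa have "a \<in> (\<lambda>c. vec_mat n c (Pm n \<sigma> p)) ` C" by (rule IntD1)
      then obtain c where ac: "a = vec_mat n c (Pm n \<sigma> p)" and c: "c \<in> C" by (rule imageE)
      have "\<forall>i<n. c i * p i = a (\<sigma> i)"
      proof (intro allI impI)
        fix i assume "i < n"
        then have "vec_mat n c (Pm n \<sigma> p) (\<sigma> i) = c i * p i" by (simp add: vec_mat_Pm[OF s] sinv)
        then show "c i * p i = a (\<sigma> i)" unfolding ac by simp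
      qed
      then show "a \<in> {a \<in> subvecs F n. \<exists>c\<in>C. \<forall>i<n. c i * p i = a (\<sigma> i)}" using a c by blast
    qed
  next
    show "{a \<in> subvecs F n. \<exists>c\<in>C. \<forall>i<n. c i * p i = a (\<sigma> i)}
        \<subseteq> (\<lambda>c. vec_mat n c (Pm n \<sigma> p)) ` C \<inter> subvecs F n"
    proof
      fix a assume "a \<in> {a \<in> subvecs F n. \<exists>c\<in>C. \<forall>i<n. c i * p i = a (\<sigma> i)}"
      then obtain c where a: "a \<in> subvecs F n" and c: "c \<in> C" and ca: "\<forall>i<n. c i * p i = a (\<sigma> i)"
        by blast
      have "a = vec_mat n c (Pm n \<sigma> p)"
      proof
        fix j
        show "a j = vec_mat n c (Pm n \<sigma> p) j"
        proof (cases "j < n")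
          case True
          then show ?thesis using ca invlt[of j] sinv2[of j] by (simp add: vec_mat_Pm[OF s])
        next
          case False
          then show ?thesis using a invlt[of j] unfolding subvecs_def vecs_def
            by (simp add: vec_mat_Pm[OF s])
        qed
      qed
      then show "a \<in> (\<lambda>c. vec_mat n c (Pm n \<sigma> p)) ` C \<inter> subvecs F n" using a c by blast
    qed
  qed
qed


theorem theorem4:
  fixes F :: "'a::{field, finite} set" and n m :: nat and C :: "(nat \<Rightarrow> 'a) set"
  assumes "subfield F"
    and "m \<ge> 1"
    and "\<exists>B. is_basis F m B"
    and "linear_code n C"
  shows "{GSS F n m B u f \<pi> C | B u f \<pi>.
            is_basis F m B \<and> (\<forall>j<n. u j < m) \<and> (\<forall>j<n. f j \<in> GLq F m)
            \<and> \<pi> permutes {..<n}}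
       = {((\<lambda>c. vec_mat n c P) ` C) \<inter> subvecs F n | P. monomial_matrix n P}"
proof
  show "{GSS F n m B u f \<pi> C | B u f \<pi>.
            is_basis F m B \<and> (\<forall>j<n. u j < m) \<and> (\<forall>j<n. f j \<in> GLq F m)
            \<and> \<pi> permutes {..<n}}
       \<subseteq> {((\<lambda>c. vec_mat n c P) ` C) \<inter> subvecs F n | P. monomial_matrix n P}"
  proof
    fix X assume "X \<in> {GSS F n m B u f \<pi> C | B u f \<pi>.
            is_basis F m B \<and> (\<forall>j<n. u j < m) \<and> (\<forall>j<n. f j \<in> GLq F m)
            \<and> \<pi> permutes {..<n}}"
    then obtain B u f \<pi> where X: "X = GSS F n m B u f \<pi> C" and bas: "is_basis F m B"
      and u: "\<forall>j<n. u j < m" and f: "\<forall>j<n. f j \<in> GLq F m" and pi: "\<pi> permutes {..<n}"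
      by blast
    interpret bctx F m B using assms(1,2) bas by unfold_locales
    have pilt: "\<pi> i < n" if "i < n" for i using permutes_in_image[OF pi, of i] that by auto
    have "\<forall>i. \<exists>b. i < n \<longrightarrow> f i (coords F m B b) = uvec (u (\<pi> i))"
    proof
      fix i show "\<exists>b. i < n \<longrightarrow> f i (coords F m B b) = uvec (u (\<pi> i))"
      proof (cases "i < n")
        case True
        have fi: "f i \<in> GLq F m" using f True by blast
        have "uvec (u (\<pi> i)) \<in> subvecs F m"
          using uvec_subvecs[OF sf] u pilt[OF True] by blast
        then obtain v where v: "v \<in> subvecs F m" and fv: "f i v = uvec (u (\<pi> i))"
          using GLq_surj[OF fi] by blast
        then show ?thesis using coords_dec[OF v] by metis
      qed simp
    qed
    then obtain \<beta> where beta0: "\<forall>i. i < n \<longrightarrow> f i (coords F m B (\<beta> i)) = uvec (u (\<pi> i))"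
      by (rule choice[THEN exE])
    then have beta: "\<forall>i<n. f i (coords F m B (\<beta> i)) = uvec (u (\<pi> i))" by blast
    have bnz: "\<beta> i \<noteq> 0" if i: "i < n" for i
    proof
      assume "\<beta> i = 0"
      then have "uvec (u (\<pi> i)) = f i (\<lambda>_. 0)" using beta i coords_zero by metis
      also have "\<dots> = (\<lambda>_. 0)" using GLq_zero[OF _ sf] f i by blast
      finally have "uvec (u (\<pi> i)) (u (\<pi> i)) = (0::'a)" by simp
      then show False unfolding uvec_def by simp
    qed
    have "X = {a \<in> subvecs F n. \<exists>c\<in>C. \<forall>i<n. c i = a (\<pi> i) * \<beta> i}"
      unfolding X by (rule GSS_char[OF pi u f beta])
    also have "\<dots> = {a \<in> subvecs F n. \<exists>c\<in>C. \<forall>i<n. c i * inverse (\<beta> i) = a (\<pi> i)}"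
    proof -
      have "c i = a' * \<beta> i \<longleftrightarrow> c i * inverse (\<beta> i) = a'" if "i < n" for c i a'
        using bnz[OF that] by (auto simp: field_simps)
      then show ?thesis by (metis (no_types, lifting))
    qed
    also have "\<dots> = (\<lambda>c. vec_mat n c (Pm n \<pi> (\<lambda>i. inverse (\<beta> i)))) ` C \<inter> subvecs F n"
      by (rule image_Pm[OF pi, symmetric])
    finally have "X = (\<lambda>c. vec_mat n c (Pm n \<pi> (\<lambda>i. inverse (\<beta> i)))) ` C \<inter> subvecs F n" .
    moreover have "monomial_matrix n (Pm n \<pi> (\<lambda>i. inverse (\<beta> i)))"
      by (rule Pm_monomial[OF pi]) (simp add: bnz)
    ultimately show "X \<in> {((\<lambda>c. vec_mat n c P) ` C) \<inter> subvecs F n | P. monomial_matrix n P}"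
      by blast
  qed
next
  show "{((\<lambda>c. vec_mat n c P) ` C) \<inter> subvecs F n | P. monomial_matrix n P}
     \<subseteq> {GSS F n m B u f \<pi> C | B u f \<pi>.
            is_basis F m B \<and> (\<forall>j<n. u j < m) \<and> (\<forall>j<n. f j \<in> GLq F m)
            \<and> \<pi> permutes {..<n}}"
  proof
    fix X assume "X \<in> {((\<lambda>c. vec_mat n c P) ` C) \<inter> subvecs F n | P. monomial_matrix n P}"
    then obtain P where X: "X = (\<lambda>c. vec_mat n c P) ` C \<inter> subvecs F n" and P: "monomial_matrix n P"
      by blast
    obtain \<sigma> p where s: "\<sigma> permutes {..<n}" and p: "\<forall>i<n. p i \<noteq> 0" and Pe: "P = Pm n \<sigma> p"
      using monomial_Pm[OF P] by blast
    obtain B where bas: "is_basis F m B" using assms(3) by blast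
    interpret bctx F m B using assms(1,2) bas by unfold_locales
    define f where "f i = (\<lambda>v. coords F m B (p i * B ! 0 * dec m B v))" for i
    have fGL: "\<forall>i<n. f i \<in> GLq F m"
      unfolding f_def using mul_GLq p B0_nz by simp
    have u: "\<forall>j<n. (\<lambda>_. 0::nat) j < m" using m1 by simp
    have beta: "\<forall>i<n. f i (coords F m B (inverse (p i))) = uvec ((\<lambda>_. 0::nat) (\<sigma> i))"
    proof (intro allI impI)
      fix i assume i: "i < n"
      have e2: "p i * B ! 0 * inverse (p i) = B ! 0" using p i by (simp add: field_simps)
      have "f i (coords F m B (inverse (p i))) = coords F m B (p i * B ! 0 * inverse (p i))"
        unfolding f_def by (simp only: dec_coords)
      also have "\<dots> = coords F m B (B ! 0)" by (simp only: e2)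
      also have "\<dots> = uvec 0" using coords_B m1 by simp
      finally show "f i (coords F m B (inverse (p i))) = uvec ((\<lambda>_. 0::nat) (\<sigma> i))" by simp
    qed
    have "GSS F n m B (\<lambda>_. 0) f \<sigma> C = {a \<in> subvecs F n. \<exists>c\<in>C. \<forall>i<n. c i = a (\<sigma> i) * inverse (p i)}"
      by (rule GSS_char[OF s u fGL beta])
    also have "\<dots> = {a \<in> subvecs F n. \<exists>c\<in>C. \<forall>i<n. c i * p i = a (\<sigma> i)}"
    proof -
      have "c i = a' * inverse (p i) \<longleftrightarrow> c i * p i = a'" if "i < n" for c i a'
        using p that by (auto simp: field_simps)
      then show ?thesis by (metis (no_types, lifting))
    qed
    also have "\<dots> = X" unfolding X Pe by (rule image_Pm[OF s, symmetric])
    finally have "X = GSS F n m B (\<lambda>_. 0) f \<sigma> C" by simp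
    then show "X \<in> {GSS F n m B u f \<pi> C | B u f \<pi>.
            is_basis F m B \<and> (\<forall>j<n. u j < m) \<and> (\<forall>j<n. f j \<in> GLq F m)
            \<and> \<pi> permutes {..<n}}"
      using bas u fGL s by blast
  qed
qed

end
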